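(* Let $R$ be a unital associative superalgebra over $\Bbbk$ and $n\geqslant 2$. Then the Lie superalgebra $\mathfrak{sq}_n(R)$ is perfect, i.e. $[\mathfrak{sq}_n(R),\mathfrak{sq}_n(R)]=\mathfrak{sq}_n(R)$, and $$\mathfrak{sq}_n(R)=\left\{\begin{pmatrix}A&B\\\rho(B)&\rho(A)\end{pmatrix}: A,B\in\mathrm{M}_n(R),\ \mathrm{Tr}(B)\in[R,R]\right\}.$$
   Context: $\Bbbk$ is a unital commutative associative ring in which $2$ is invertible; $|x|$ denotes parity. $[R,R]$ is the $\Bbbk$-span of super-commutators $ab-(-1)^{|a||b|}ba$ of homogeneous $a,b\in R$. $\mathfrak{gl}_{n|n}(R)$ is the Lie superalgebra of $2n\times 2n$ matrices over $R$ with the matrix unit $e_{ij}(a)$ of parity $|i|+|j|+|a|$ ($|i|=0$ for $i\leqslant n$, $|i|=1$ for $i>n$) and bracket $[X,Y]=XY-(-1)^{|X||Y|}YX$. For homogeneous $a\in R$, $\rho(a)=(-1)^{|a|}a$ (extended linearly), applied entrywise to matrices. $\mathfrak{q}_n(R)=\left\{\begin{pmatrix}A&B\\\rho(B)&\rho(A)\end{pmatrix}: A,B\in \mathrm{M}_n(R)\right\}\subseteq\mathfrak{gl}_{n|n}(R)$ and $\mathfrak{sq}_n(R)=[\mathfrak{q}_n(R),\mathfrak{q}_n(R)]$. *)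

theory Defs
  imports Main
begin

(* A unital associative superalgebra R over a commutative ring k (with 2 invertible):
   the carrier is the type 'r (a ring with 1), sm is the k-action,
   R0 / R1 are the even / odd components. *)
definition superalg :: "('k::comm_ring_1 \<Rightarrow> 'r::ring_1 \<Rightarrow> 'r) \<Rightarrow> 'r set \<Rightarrow> 'r set \<Rightarrow> bool" where
  "superalg sm R0 R1 \<longleftrightarrow>
     (\<exists>h::'k. 2 * h = 1) \<and>
     (\<forall>c a b. sm c (a + b) = sm c a + sm c b) \<and>
     (\<forall>c d a. sm (c + d) a = sm c a + sm d a) \<and>
     (\<forall>c d a. sm (c * d) a = sm c (sm d a)) \<and>
     (\<forall>a. sm 1 a = a) \<and>
     (\<forall>c a b. sm c (a * b) = sm c a * b \<and> sm c (a * b) = a * sm c b) \<and>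
     (\<forall>S\<in>{R0, R1}. 0 \<in> S \<and> (\<forall>a\<in>S. \<forall>b\<in>S. a + b \<in> S) \<and> (\<forall>c. \<forall>a\<in>S. sm c a \<in> S)) \<and>
     R0 \<inter> R1 = {0} \<and>
     (\<forall>a. \<exists>a0\<in>R0. \<exists>a1\<in>R1. a = a0 + a1) \<and>
     1 \<in> R0 \<and>
     (\<forall>a\<in>R0. \<forall>b\<in>R0. a * b \<in> R0) \<and>
     (\<forall>a\<in>R0. \<forall>b\<in>R1. a * b \<in> R1) \<and>
     (\<forall>a\<in>R1. \<forall>b\<in>R0. a * b \<in> R1) \<and>
     (\<forall>a\<in>R1. \<forall>b\<in>R1. a * b \<in> R0)"

definition hom :: "'r set \<Rightarrow> 'r set \<Rightarrow> bool \<Rightarrow> 'r \<Rightarrow> bool" where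
  "hom R0 R1 p a \<longleftrightarrow> a \<in> (if p then R1 else R0)"

definition rho :: "'r::ring_1 set \<Rightarrow> 'r set \<Rightarrow> 'r \<Rightarrow> 'r" where
  "rho R0 R1 a = (THE b. \<exists>a0\<in>R0. \<exists>a1\<in>R1. a = a0 + a1 \<and> b = a0 - a1)"

definition scomm :: "bool \<Rightarrow> bool \<Rightarrow> 'r::ring_1 \<Rightarrow> 'r \<Rightarrow> 'r" where
  "scomm p q a b = (if p \<and> q then a * b + b * a else a * b - b * a)"

definition kspan :: "('k \<Rightarrow> 'r::ring_1 \<Rightarrow> 'r) \<Rightarrow> 'r set \<Rightarrow> 'r set" where
  "kspan sm S = {x. \<exists>(m::nat) c v. (\<forall>t<m. v t \<in> S) \<and> x = (\<Sum>t<m. sm (c t) (v t))}"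

definition commR :: "('k \<Rightarrow> 'r::ring_1 \<Rightarrow> 'r) \<Rightarrow> 'r set \<Rightarrow> 'r set \<Rightarrow> 'r set" where
  "commR sm R0 R1 = kspan sm {scomm p q a b | p q a b. hom R0 R1 p a \<and> hom R0 R1 q b}"

(* Matrices in gl_{n|n}(R): functions nat => nat => 'r, indices 0..<2n,
   zero outside; index i has parity (n <= i). *)
type_synonym 'r mat = "nat \<Rightarrow> nat \<Rightarrow> 'r"

definition gl :: "nat \<Rightarrow> 'r::ring_1 mat set" where
  "gl n = {X. \<forall>i j. (2 * n \<le> i \<or> 2 * n \<le> j) \<longrightarrow> X i j = 0}"

definition mmul :: "nat \<Rightarrow> 'r::ring_1 mat \<Rightarrow> 'r mat \<Rightarrow> 'r mat" where
  "mmul n X Y = (\<lambda>i j. \<Sum>k<2 * n. X i k * Y k j)"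

definition mhom :: "'r set \<Rightarrow> 'r set \<Rightarrow> nat \<Rightarrow> bool \<Rightarrow> 'r::ring_1 mat \<Rightarrow> bool" where
  "mhom R0 R1 n p X \<longleftrightarrow> X \<in> gl n \<and>
     (\<forall>i<2 * n. \<forall>j<2 * n. hom R0 R1 (p \<noteq> ((n \<le> i) \<noteq> (n \<le> j))) (X i j))"

definition mbr :: "nat \<Rightarrow> bool \<Rightarrow> bool \<Rightarrow> 'r::ring_1 mat \<Rightarrow> 'r mat \<Rightarrow> 'r mat" where
  "mbr n p q X Y = (\<lambda>i j. if p \<and> q then mmul n X Y i j + mmul n Y X i j
                            else mmul n X Y i j - mmul n Y X i j)"

definition mspan :: "('k \<Rightarrow> 'r::ring_1 \<Rightarrow> 'r) \<Rightarrow> 'r mat set \<Rightarrow> 'r mat set" where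
  "mspan sm S = {X. \<exists>(m::nat) c V. (\<forall>t<m. V t \<in> S) \<and>
                     (\<forall>i j. X i j = (\<Sum>t<m. sm (c t) (V t i j)))}"

definition derived :: "('k \<Rightarrow> 'r::ring_1 \<Rightarrow> 'r) \<Rightarrow> 'r set \<Rightarrow> 'r set \<Rightarrow> nat \<Rightarrow> 'r mat set \<Rightarrow> 'r mat set" where
  "derived sm R0 R1 n L = mspan sm {mbr n p q X Y | p q X Y.
       X \<in> L \<and> Y \<in> L \<and> mhom R0 R1 n p X \<and> mhom R0 R1 n q Y}"

(* q_n(R): matrices (A B; rho B  rho A) *)
definition qn :: "'r set \<Rightarrow> 'r set \<Rightarrow> nat \<Rightarrow> 'r::ring_1 mat set" where
  "qn R0 R1 n = {X \<in> gl n. \<forall>i<n. \<forall>j<n.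
       X (i + n) (j + n) = rho R0 R1 (X i j) \<and> X (i + n) j = rho R0 R1 (X i (j + n))}"

definition sqn :: "('k \<Rightarrow> 'r::ring_1 \<Rightarrow> 'r) \<Rightarrow> 'r set \<Rightarrow> 'r set \<Rightarrow> nat \<Rightarrow> 'r mat set" where
  "sqn sm R0 R1 n = derived sm R0 R1 n (qn R0 R1 n)"

end

theory Submission
  imports Defs "HOL-Library.Function_Algebras"
begin


lemma sum_concat: "(\<Sum>t<m1+m2. f t) = (\<Sum>t<m1. f t) + (\<Sum>t<m2. f (m1+t)) "
  for f :: "nat \<Rightarrow> 'a::comm_monoid_add"
  by (induction m2) (simp_all add: add.assoc)

locale sa =
  fixes sm :: "'k::comm_ring_1 \<Rightarrow> 'r::ring_1 \<Rightarrow> 'r" and R0 R1 :: "'r set"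
  assumes SA: "superalg sm R0 R1"
begin

lemma half: "\<exists>h::'k. 2 * h = 1" using SA[unfolded superalg_def, THEN conjunct1] by blast
lemma sm_add: "sm c (a + b) = sm c a + sm c b" using SA[unfolded superalg_def, THEN conjunct2, THEN conjunct1] by blast
lemma sm_distr: "sm (c + d) a = sm c a + sm d a" using SA[unfolded superalg_def, THEN conjunct2, THEN conjunct2, THEN conjunct1] by blast
lemma sm_assoc: "sm (c * d) a = sm c (sm d a)" using SA[unfolded superalg_def, THEN conjunct2, THEN conjunct2, THEN conjunct2, THEN conjunct1] by blast
lemma sm_one[simp]: "sm 1 a = a" using SA[unfolded superalg_def, THEN conjunct2, THEN conjunct2, THEN conjunct2, THEN conjunct2, THEN conjunct1] by blast
lemma sm_multL: "sm c (a * b) = sm c a * b" using SA[unfolded superalg_def, THEN conjunct2, THEN conjunct2, THEN conjunct2, THEN conjunct2, THEN conjunct2, THEN conjunct1] by blast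
lemma sm_multR: "sm c (a * b) = a * sm c b" using SA[unfolded superalg_def, THEN conjunct2, THEN conjunct2, THEN conjunct2, THEN conjunct2, THEN conjunct2, THEN conjunct1] by blast
lemma R0_0[simp]: "0 \<in> R0" using SA[unfolded superalg_def, THEN conjunct2, THEN conjunct2, THEN conjunct2, THEN conjunct2, THEN conjunct2, THEN conjunct2, THEN conjunct1] by simp
lemma R1_0[simp]: "0 \<in> R1" using SA[unfolded superalg_def, THEN conjunct2, THEN conjunct2, THEN conjunct2, THEN conjunct2, THEN conjunct2, THEN conjunct2, THEN conjunct1] by simp
lemma R0_add: "a \<in> R0 \<Longrightarrow> b \<in> R0 \<Longrightarrow> a + b \<in> R0" using SA[unfolded superalg_def, THEN conjunct2, THEN conjunct2, THEN conjunct2, THEN conjunct2, THEN conjunct2, THEN conjunct2, THEN conjunct1] by simp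
lemma R1_add: "a \<in> R1 \<Longrightarrow> b \<in> R1 \<Longrightarrow> a + b \<in> R1" using SA[unfolded superalg_def, THEN conjunct2, THEN conjunct2, THEN conjunct2, THEN conjunct2, THEN conjunct2, THEN conjunct2, THEN conjunct1] by simp
lemma R0_sm: "a \<in> R0 \<Longrightarrow> sm c a \<in> R0" using SA[unfolded superalg_def, THEN conjunct2, THEN conjunct2, THEN conjunct2, THEN conjunct2, THEN conjunct2, THEN conjunct2, THEN conjunct1] by simp
lemma R1_sm: "a \<in> R1 \<Longrightarrow> sm c a \<in> R1" using SA[unfolded superalg_def, THEN conjunct2, THEN conjunct2, THEN conjunct2, THEN conjunct2, THEN conjunct2, THEN conjunct2, THEN conjunct1] by simp
lemma R01: "R0 \<inter> R1 = {0}" using SA[unfolded superalg_def, THEN conjunct2, THEN conjunct2, THEN conjunct2, THEN conjunct2, THEN conjunct2, THEN conjunct2, THEN conjunct2, THEN conjunct1] by blast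
lemma decomp: "\<exists>a0\<in>R0. \<exists>a1\<in>R1. a = a0 + a1" using SA[unfolded superalg_def, THEN conjunct2, THEN conjunct2, THEN conjunct2, THEN conjunct2, THEN conjunct2, THEN conjunct2, THEN conjunct2, THEN conjunct2, THEN conjunct1] by blast
lemma R0_1[simp]: "1 \<in> R0" using SA[unfolded superalg_def, THEN conjunct2, THEN conjunct2, THEN conjunct2, THEN conjunct2, THEN conjunct2, THEN conjunct2, THEN conjunct2, THEN conjunct2, THEN conjunct2, THEN conjunct1] by blast
lemma mul00: "a \<in> R0 \<Longrightarrow> b \<in> R0 \<Longrightarrow> a * b \<in> R0" using SA[unfolded superalg_def, THEN conjunct2, THEN conjunct2, THEN conjunct2, THEN conjunct2, THEN conjunct2, THEN conjunct2, THEN conjunct2, THEN conjunct2, THEN conjunct2, THEN conjunct2, THEN conjunct1] by blast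
lemma mul01: "a \<in> R0 \<Longrightarrow> b \<in> R1 \<Longrightarrow> a * b \<in> R1" using SA[unfolded superalg_def, THEN conjunct2, THEN conjunct2, THEN conjunct2, THEN conjunct2, THEN conjunct2, THEN conjunct2, THEN conjunct2, THEN conjunct2, THEN conjunct2, THEN conjunct2, THEN conjunct2, THEN conjunct1] by blast
lemma mul10: "a \<in> R1 \<Longrightarrow> b \<in> R0 \<Longrightarrow> a * b \<in> R1" using SA[unfolded superalg_def, THEN conjunct2, THEN conjunct2, THEN conjunct2, THEN conjunct2, THEN conjunct2, THEN conjunct2, THEN conjunct2, THEN conjunct2, THEN conjunct2, THEN conjunct2, THEN conjunct2, THEN conjunct2, THEN conjunct1] by blast
lemma mul11: "a \<in> R1 \<Longrightarrow> b \<in> R1 \<Longrightarrow> a * b \<in> R0" using SA[unfolded superalg_def, THEN conjunct2, THEN conjunct2, THEN conjunct2, THEN conjunct2, THEN conjunct2, THEN conjunct2, THEN conjunct2, THEN conjunct2, THEN conjunct2, THEN conjunct2, THEN conjunct2, THEN conjunct2, THEN conjunct2] by blast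

lemma sm_zero[simp]: "sm c 0 = 0"
  using sm_add[of c 0 0] by simp
lemma sm_zeroL[simp]: "sm 0 a = 0"
  using sm_distr[of 0 0 a] by simp
lemma sm_neg1: "sm (-1) a = - a"
proof -
  have "sm (-1) a + a = 0" using sm_distr[of "-1" 1 a] by simp
  thus ?thesis by (simp add: eq_neg_iff_add_eq_0)
qed
lemma sm_uminus: "sm c (- a) = - sm c a"
  by (metis add_eq_0_iff2 sm_add sm_zero add.right_inverse)
lemma sm_diff: "sm c (a - b) = sm c a - sm c b"
  using sm_add[of c a "- b"] sm_uminus[of c b] by simp
lemma sm_sum: "sm c (\<Sum>t\<in>T. f t) = (\<Sum>t\<in>T. sm c (f t))"
  by (induction T rule: infinite_finite_induct) (simp_all add: sm_add)
lemma R0_neg: "a \<in> R0 \<Longrightarrow> - a \<in> R0" using R0_sm[of a "-1"] by (simp add: sm_neg1)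
lemma R1_neg: "a \<in> R1 \<Longrightarrow> - a \<in> R1" using R1_sm[of a "-1"] by (simp add: sm_neg1)
lemma R0_diff: "a \<in> R0 \<Longrightarrow> b \<in> R0 \<Longrightarrow> a - b \<in> R0" using R0_add R0_neg by (metis diff_conv_add_uminus)
lemma R1_diff: "a \<in> R1 \<Longrightarrow> b \<in> R1 \<Longrightarrow> a - b \<in> R1" using R1_add R1_neg by (metis diff_conv_add_uminus)

lemma uniq: assumes "a0 \<in> R0" "a1 \<in> R1" "b0 \<in> R0" "b1 \<in> R1" "a0 + a1 = b0 + b1"
  shows "a0 = b0 \<and> a1 = b1"
proof -
  have e: "a0 - b0 = b1 - a1" using assms(5) by (simp add: algebra_simps)
  have "a0 - b0 \<in> R0" using assms R0_diff by auto
  moreover have "a0 - b0 \<in> R1" unfolding e using assms R1_diff by auto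
  ultimately have "a0 - b0 \<in> R0 \<inter> R1" by blast
  then have "a0 - b0 = 0" using R01 by blast
  then have "a0 = b0" by simp
  with assms(5) show ?thesis by simp
qed

lemma rho_eq: assumes "a0 \<in> R0" "a1 \<in> R1" shows "rho R0 R1 (a0 + a1) = a0 - a1"
  unfolding rho_def
proof (rule the_equality)
  show "\<exists>b0\<in>R0. \<exists>b1\<in>R1. a0 + a1 = b0 + b1 \<and> a0 - a1 = b0 - b1" using assms by blast
next
  fix b assume "\<exists>b0\<in>R0. \<exists>b1\<in>R1. a0 + a1 = b0 + b1 \<and> b = b0 - b1"
  then obtain b0 b1 where "b0\<in>R0" "b1\<in>R1" "a0 + a1 = b0 + b1" "b = b0 - b1" by blast
  with uniq[OF assms] show "b = a0 - a1" by auto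
qed

abbreviation "\<rho> \<equiv> rho R0 R1"

lemma rho0: "a \<in> R0 \<Longrightarrow> \<rho> a = a" using rho_eq[of a 0] by simp
lemma rho1: "a \<in> R1 \<Longrightarrow> \<rho> a = - a" using rho_eq[of 0 a] by simp
lemma rho_zero[simp]: "\<rho> 0 = 0" by (simp add: rho0)
lemma rho_one[simp]: "\<rho> 1 = 1" by (simp add: rho0)

lemma rho_add: "\<rho> (a + b) = \<rho> a + \<rho> b"
proof -
  obtain a0 a1 b0 b1 where h: "a0\<in>R0" "a1\<in>R1" "a = a0 + a1" "b0\<in>R0" "b1\<in>R1" "b = b0 + b1"
    using decomp by meson
  have e: "a + b = (a0 + b0) + (a1 + b1)" using h by (simp add: algebra_simps)
  have A: "\<rho> (a + b) = (a0 + b0) - (a1 + b1)" unfolding e by (rule rho_eq) (use h R0_add R1_add in auto)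
  have B: "\<rho> a = a0 - a1" unfolding h(3) by (rule rho_eq) (use h in auto)
  have C: "\<rho> b = b0 - b1" unfolding h(6) by (rule rho_eq) (use h in auto)
  show ?thesis unfolding A B C by (simp add: algebra_simps)
qed
lemma rho_mult: "\<rho> (a * b) = \<rho> a * \<rho> b"
proof -
  obtain a0 a1 b0 b1 where h: "a0\<in>R0" "a1\<in>R1" "a = a0 + a1" "b0\<in>R0" "b1\<in>R1" "b = b0 + b1"
    using decomp by meson
  have e: "a * b = (a0 * b0 + a1 * b1) + (a0 * b1 + a1 * b0)" using h by (simp add: algebra_simps)
  have "a0 * b0 + a1 * b1 \<in> R0" using h by (simp add: R0_add mul00 mul11)
  moreover have "a0 * b1 + a1 * b0 \<in> R1" using h by (simp add: R1_add mul01 mul10)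
  ultimately have A: "\<rho> (a * b) = (a0 * b0 + a1 * b1) - (a0 * b1 + a1 * b0)" unfolding e by (rule rho_eq)
  have B: "\<rho> a = a0 - a1" unfolding h(3) by (rule rho_eq) (use h in auto)
  have C: "\<rho> b = b0 - b1" unfolding h(6) by (rule rho_eq) (use h in auto)
  show ?thesis unfolding A B C by (simp add: algebra_simps)
qed
lemma rho_sm: "\<rho> (sm c a) = sm c (\<rho> a)"
proof -
  obtain a0 a1 where h: "a0\<in>R0" "a1\<in>R1" "a = a0 + a1" using decomp by meson
  then have e: "sm c a = sm c a0 + sm c a1" by (simp add: sm_add)
  have "\<rho> (sm c a) = sm c a0 - sm c a1" unfolding e by (rule rho_eq) (use h R0_sm R1_sm in auto)
  moreover have "\<rho> a = a0 - a1" unfolding h(3) by (rule rho_eq) (use h in auto)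
  ultimately show ?thesis by (simp add: sm_diff)
qed
lemma rho_rho[simp]: "\<rho> (\<rho> a) = a"
proof -
  obtain a0 a1 where h: "a0\<in>R0" "a1\<in>R1" "a = a0 + a1" using decomp by meson
  have "\<rho> a = a0 + (- a1)" unfolding h(3) using rho_eq[OF h(1,2)] by simp
  moreover have "\<rho> (a0 + (- a1)) = a0 - (- a1)" by (rule rho_eq) (use h R1_neg in auto)
  ultimately show ?thesis using h by simp
qed
lemma rho_uminus: "\<rho> (- a) = - \<rho> a"
  by (metis add.right_inverse add_eq_0_iff2 rho_add rho_zero)
lemma rho_diff: "\<rho> (a - b) = \<rho> a - \<rho> b"
  using rho_add[of a "- b"] rho_uminus[of b] by simp
lemma rho_sum: "\<rho> (\<Sum>t\<in>T. f t) = (\<Sum>t\<in>T. \<rho> (f t))"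
  by (induction T rule: infinite_finite_induct) (simp_all add: rho_add)

lemma hom_rho: "hom R0 R1 p a \<Longrightarrow> \<rho> a = (if p then - a else a)"
  by (auto simp: hom_def rho0 rho1 split: if_splits)

end


context sa begin

lemma kspan_0: "0 \<in> kspan sm S"
  unfolding kspan_def by (rule CollectI, rule exI[of _ 0]) simp
lemma kspan_gen: "x \<in> S \<Longrightarrow> x \<in> kspan sm S"
  unfolding kspan_def by (rule CollectI, rule exI[of _ 1], rule exI[of _ "\<lambda>_. 1"], rule exI[of _ "\<lambda>_. x"]) simp
lemma kspan_add: assumes "x \<in> kspan sm S" "y \<in> kspan sm S" shows "x + y \<in> kspan sm S"
proof -
  obtain m1 c1 v1 where 1: "\<forall>t<(m1::nat). v1 t \<in> S" "x = (\<Sum>t<m1. sm (c1 t) (v1 t))"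
    using assms(1) unfolding kspan_def by blast
  obtain m2 c2 v2 where 2: "\<forall>t<(m2::nat). v2 t \<in> S" "y = (\<Sum>t<m2. sm (c2 t) (v2 t))"
    using assms(2) unfolding kspan_def by blast
  define c where "c t = (if t < m1 then c1 t else c2 (t - m1))" for t
  define v where "v t = (if t < m1 then v1 t else v2 (t - m1))" for t
  have a: "\<forall>t<m1+m2. v t \<in> S" using 1 2 by (auto simp: v_def)
  have b: "x + y = (\<Sum>t<m1+m2. sm (c t) (v t))"
    unfolding sum_concat 1 2 c_def v_def by simp
  show ?thesis unfolding kspan_def mem_Collect_eq
    by (intro exI[of _ "m1+m2"] exI[of _ c] exI[of _ v] conjI a b)
qed
lemma kspan_sm: assumes "x \<in> kspan sm S" shows "sm c x \<in> kspan sm S"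
proof -
  obtain m1 c1 v1 where 1: "\<forall>t<(m1::nat). v1 t \<in> S" "x = (\<Sum>t<m1. sm (c1 t) (v1 t))"
    using assms(1) unfolding kspan_def by blast
  have "sm c x = (\<Sum>t<m1. sm c (sm (c1 t) (v1 t)))" using 1(2) by (simp add: sm_sum)
  also have "\<dots> = (\<Sum>t<m1. sm (c * c1 t) (v1 t))" by (simp add: sm_assoc)
  finally have b: "sm c x = (\<Sum>t<m1. sm (c * c1 t) (v1 t))" .
  show ?thesis unfolding kspan_def mem_Collect_eq
    by (intro exI[of _ "m1"] exI[of _ "\<lambda>t. c * c1 t"] exI[of _ v1] conjI 1(1) b)
qed
lemma kspan_neg: "x \<in> kspan sm S \<Longrightarrow> - x \<in> kspan sm S"
  using kspan_sm[of x S "-1"] by (simp add: sm_neg1)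
lemma kspan_diff: "x \<in> kspan sm S \<Longrightarrow> y \<in> kspan sm S \<Longrightarrow> x - y \<in> kspan sm S"
  using kspan_add kspan_neg by (metis diff_conv_add_uminus)
lemma kspan_sum: "finite T \<Longrightarrow> (\<And>t. t \<in> T \<Longrightarrow> f t \<in> kspan sm S) \<Longrightarrow> (\<Sum>t\<in>T. f t) \<in> kspan sm S"
  by (induction T rule: finite_induct) (simp_all add: kspan_0 kspan_add)

lemma mspan_0: "(\<lambda>i j. 0) \<in> mspan sm S"
  unfolding mspan_def by (rule CollectI, rule exI[of _ 0]) simp
lemma mspan_gen: "x \<in> S \<Longrightarrow> x \<in> mspan sm S"
  unfolding mspan_def by (rule CollectI, rule exI[of _ 1], rule exI[of _ "\<lambda>_. 1"], rule exI[of _ "\<lambda>_. x"]) simp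
lemma mspan_add: assumes "x \<in> mspan sm S" "y \<in> mspan sm S" shows "(\<lambda>i j. x i j + y i j) \<in> mspan sm S"
proof -
  obtain m1 c1 v1 where 1: "\<forall>t<(m1::nat). v1 t \<in> S" "\<forall>i j. x i j = (\<Sum>t<m1. sm (c1 t) (v1 t i j))"
    using assms(1) unfolding mspan_def by blast
  obtain m2 c2 v2 where 2: "\<forall>t<(m2::nat). v2 t \<in> S" "\<forall>i j. y i j = (\<Sum>t<m2. sm (c2 t) (v2 t i j))"
    using assms(2) unfolding mspan_def by blast
  define c where "c t = (if t < m1 then c1 t else c2 (t - m1))" for t
  define v where "v t = (if t < m1 then v1 t else v2 (t - m1))" for t
  have a: "\<forall>t<m1+m2. v t \<in> S" using 1 2 by (auto simp: v_def)
  have b: "\<forall>i j. x i j + y i j = (\<Sum>t<m1+m2. sm (c t) (v t i j))"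
    using 1(2) 2(2) unfolding sum_concat c_def v_def by simp
  show ?thesis unfolding mspan_def mem_Collect_eq
    by (intro exI[of _ "m1+m2"] exI[of _ c] exI[of _ v] conjI a b)
qed
lemma mspan_sm: assumes "x \<in> mspan sm S" shows "(\<lambda>i j. sm c (x i j)) \<in> mspan sm S"
proof -
  obtain m1 c1 v1 where 1: "\<forall>t<(m1::nat). v1 t \<in> S" "\<forall>i j. x i j = (\<Sum>t<m1. sm (c1 t) (v1 t i j))"
    using assms(1) unfolding mspan_def by blast
  have b: "\<forall>i j. sm c (x i j) = (\<Sum>t<m1. sm (c * c1 t) (v1 t i j))" using 1(2) by (simp add: sm_sum sm_assoc)
  show ?thesis unfolding mspan_def mem_Collect_eq
    by (intro exI[of _ "m1"] exI[of _ "\<lambda>t. c * c1 t"] exI[of _ v1] conjI 1(1) b)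
qed
lemma mspan_add': "x \<in> mspan sm S \<Longrightarrow> y \<in> mspan sm S \<Longrightarrow> x + y \<in> mspan sm S"
  using mspan_add[of x S y] by (simp add: plus_fun_def)
lemma mspan_neg: "x \<in> mspan sm S \<Longrightarrow> - x \<in> mspan sm S"
  using mspan_sm[of x S "-1"] by (simp add: sm_neg1 fun_Compl_def)
lemma mspan_diff: "x \<in> mspan sm S \<Longrightarrow> y \<in> mspan sm S \<Longrightarrow> x - y \<in> mspan sm S"
  using mspan_add' mspan_neg by (metis diff_conv_add_uminus)
lemma mspan_sum: "finite T \<Longrightarrow> (\<And>t. t \<in> T \<Longrightarrow> f t \<in> mspan sm S) \<Longrightarrow> (\<lambda>i j. \<Sum>t\<in>T. f t i j) \<in> mspan sm S"
proof (induction T rule: finite_induct)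
  case empty then show ?case using mspan_0 by simp
next
  case (insert x F)
  then show ?case using mspan_add[of "f x" S "\<lambda>i j. \<Sum>t\<in>F. f t i j"] by simp
qed
lemma mspan_half: assumes "x + x \<in> mspan sm S" shows "x \<in> mspan sm S"
proof -
  obtain h :: 'k where h: "2 * h = 1" using half by blast
  have "sm h (x i j + x i j) = x i j" for i j
  proof -
    have "sm h (x i j + x i j) = sm (h + h) (x i j)" by (simp only: sm_add sm_distr)
    also have "h + h = 1" using h by (simp add: mult_2[symmetric])
    finally show ?thesis by simp
  qed
  then have "(\<lambda>i j. sm h ((x + x) i j)) = x" by simp
  with mspan_sm[OF assms, of h] show ?thesis by simp
qed
lemma mspan_mono: "S \<subseteq> T \<Longrightarrow> mspan sm S \<subseteq> mspan sm T"
  unfolding mspan_def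
  apply (rule Collect_mono)
  apply (intro impI)
  apply (elim exE conjE)
  subgoal for X m c V by (intro exI[of _ m] exI[of _ c] exI[of _ V] conjI) auto
  done

end



definition em :: "nat \<Rightarrow> nat \<Rightarrow> 'r::ring_1 \<Rightarrow> 'r mat" where
  "em i j a = (\<lambda>k l. if k = i \<and> l = j then a else 0)"

lemma mmul_add_left: "mmul n (X + Y) Z = mmul n X Z + mmul n Y Z"
  by (rule ext, rule ext) (simp add: mmul_def distrib_right sum.distrib)
lemma mmul_add_right: "mmul n Z (X + Y) = mmul n Z X + mmul n Z Y"
  by (rule ext, rule ext) (simp add: mmul_def distrib_left sum.distrib)
lemma mmul_zero_left[simp]: "mmul n 0 Z = 0"
  by (rule ext, rule ext) (simp add: mmul_def)
lemma mmul_zero_right[simp]: "mmul n Z 0 = 0"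
  by (rule ext, rule ext) (simp add: mmul_def)
lemma mmul_em: assumes "j < 2 * n" shows "mmul n (em i j a) (em k l b) = (if j = k then em i l (a * b) else 0)"
proof (rule ext, rule ext)
  fix x y
  have "mmul n (em i j a) (em k l b) x y = (\<Sum>m<2*n. if m = j then (if x = i \<and> j = k \<and> y = l then a * b else 0) else 0)"
    unfolding mmul_def by (rule sum.cong) (auto simp: em_def)
  also have "\<dots> = (if x = i \<and> j = k \<and> y = l then a * b else 0)" using assms by simp
  finally show "mmul n (em i j a) (em k l b) x y = (if j = k then em i l (a * b) else 0) x y"
    by (simp add: em_def)
qed
lemma mmul_uminus_left: "mmul n (- X) Z = - mmul n X Z"
  by (rule ext, rule ext) (simp add: mmul_def sum_negf)
lemma mmul_uminus_right: "mmul n Z (- X) = - mmul n Z X"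
  by (rule ext, rule ext) (simp add: mmul_def sum_negf)
lemma mmul_diff_left: "mmul n (X - Y) Z = mmul n X Z - mmul n Y Z"
  by (rule ext, rule ext) (simp add: mmul_def left_diff_distrib sum_subtractf)
lemma mmul_diff_right: "mmul n Z (X - Y) = mmul n Z X - mmul n Z Y"
  by (rule ext, rule ext) (simp add: mmul_def right_diff_distrib sum_subtractf)
lemma mbr_eq: "mbr n p q X Y = (if p \<and> q then mmul n X Y + mmul n Y X else mmul n X Y - mmul n Y X)"
  by (rule ext, rule ext) (simp add: mbr_def)

context sa begin
definition EM :: "nat \<Rightarrow> nat \<Rightarrow> nat \<Rightarrow> 'r \<Rightarrow> 'r mat" where
  "EM n i j a = em i j a + em (i + n) (j + n) (\<rho> a)"
definition OM :: "nat \<Rightarrow> nat \<Rightarrow> nat \<Rightarrow> 'r \<Rightarrow> 'r mat" where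
  "OM n i j a = em i (j + n) a + em (i + n) j (\<rho> a)"

lemma t1: assumes "i < n" "j < n" "i \<noteq> j" "hom R0 R1 p a"
  shows "mbr n p False (EM n i i a) (EM n i j 1) = EM n i j a"
  using assms by (simp add: mbr_eq EM_def mmul_add_left mmul_add_right mmul_diff_left mmul_diff_right mmul_uminus_left mmul_uminus_right mmul_em rho_mult)

lemma em_uminus: "em i j (- a) = - em i j a" by (rule ext, rule ext) (simp add: em_def)
lemma em_add: "em i j (a + b) = em i j a + em i j b" by (rule ext, rule ext) (simp add: em_def)

lemma t2: assumes "i < n" "j < n" "i \<noteq> j" "hom R0 R1 q b"
  shows "mbr n (\<not> q) True (OM n i j b) (OM n j i 1) = EM n i i b + EM n j j b"
  using assms by (cases q) (simp_all add: mbr_eq EM_def OM_def mmul_add_left mmul_add_right mmul_diff_left mmul_diff_right mmul_uminus_left mmul_uminus_right mmul_em rho_mult hom_rho em_uminus algebra_simps)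

lemma t3: assumes "i < n" "j < n" "i \<noteq> j" "hom R0 R1 p b"
  shows "mbr n p False (EM n i j b) (EM n j i 1) = EM n i i b - EM n j j b"
  using assms by (simp add: mbr_eq EM_def mmul_add_left mmul_add_right mmul_diff_left mmul_diff_right mmul_uminus_left mmul_uminus_right mmul_em rho_mult)

lemma t4: assumes "i < n" "j < n" "i \<noteq> j" "hom R0 R1 p a"
  shows "mbr n p True (EM n i i a) (OM n i j 1) = OM n i j a"
  using assms by (cases p) (simp_all add: mbr_eq EM_def OM_def mmul_add_left mmul_add_right mmul_diff_left mmul_diff_right mmul_uminus_left mmul_uminus_right mmul_em rho_mult)

lemma t5: assumes "i < n" "j < n" "i \<noteq> j" "hom R0 R1 p a"
  shows "mbr n p True (EM n i j a) (OM n j i 1) = OM n i i a - OM n j j a"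
  using assms by (cases p) (simp_all add: mbr_eq EM_def OM_def mmul_add_left mmul_add_right mmul_diff_left mmul_diff_right mmul_uminus_left mmul_uminus_right mmul_em rho_mult hom_rho em_uminus algebra_simps)

lemma t6: assumes "i < n" "j < n" "i \<noteq> j" "hom R0 R1 p a" "hom R0 R1 q b"
  shows "mbr n p (\<not> q) (EM n i j a) (OM n j i b) =
    (if p \<and> q then OM n i i (a * b) + OM n j j (b * a) else OM n i i (a * b) - OM n j j (b * a))"
  using assms by (cases p; cases q) (simp_all add: mbr_eq EM_def OM_def mmul_add_left mmul_add_right mmul_diff_left mmul_diff_right mmul_uminus_left mmul_uminus_right mmul_em rho_mult hom_rho em_uminus algebra_simps)

end



lemma H1: "(\<Sum>j<(n::nat). if l = j + v then g j else 0) = (if v \<le> l \<and> l < n + v then g (l - v) else (0::'a::comm_monoid_add))"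
proof (cases "v \<le> l")
  case True
  have "(\<Sum>j<n. if l = j + v then g j else 0) = (\<Sum>j<n. if j = l - v then g j else 0)"
    by (rule sum.cong) (use True in auto)
  also have "\<dots> = (if l - v < n then g (l - v) else 0)" by (simp add: sum.delta)
  finally show ?thesis using True by auto
next
  case False
  then show ?thesis by (auto intro!: sum.neutral)
qed

lemma H: "(\<Sum>i<(n::nat). \<Sum>j<n. if k = i + u \<and> l = j + v then f i j else 0) =
   (if u \<le> k \<and> k < n + u \<and> v \<le> l \<and> l < n + v then f (k - u) (l - v) else (0::'a::comm_monoid_add))"
proof -
  have "(\<Sum>i<n. \<Sum>j<n. if k = i + u \<and> l = j + v then f i j else 0) =
        (\<Sum>i<n. if k = i + u then (\<Sum>j<n. if l = j + v then f i j else 0) else 0)"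
    by (rule sum.cong) auto
  also have "\<dots> = (\<Sum>i<n. if k = i + u then (if v \<le> l \<and> l < n + v then f i (l - v) else 0) else 0)"
    by (simp only: H1)
  also have "\<dots> = (if u \<le> k \<and> k < n + u then (if v \<le> l \<and> l < n + v then f (k - u) (l - v) else 0) else 0)"
    by (rule H1)
  finally show ?thesis by simp
qed

lemmas H00 = H[where u=0 and v=0, simplified]
lemmas H0n = H[where u=0 and v=n, simplified] for n
lemmas Hn0 = H[where u=n and v=0, simplified] for n
lemmas Hnn = H[where u=n and v=n, simplified] for n

context sa begin

definition Sset :: "nat \<Rightarrow> 'r mat set" where
  "Sset n = {X \<in> qn R0 R1 n. (\<Sum>i<n. X i (i + n)) \<in> commR sm R0 R1}"

lemma hom_0[simp]: "hom R0 R1 p 0" by (simp add: hom_def)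
lemma hom_rho': "hom R0 R1 p a \<Longrightarrow> hom R0 R1 p (\<rho> a)"
  by (auto simp: hom_rho hom_def R0_neg R1_neg)

lemma EM_apply: "EM n i j a k l = (if k = i \<and> l = j then a else 0) + (if k = i + n \<and> l = j + n then \<rho> a else 0)"
  by (simp add: EM_def em_def)
lemma OM_apply: "OM n i j a k l = (if k = i \<and> l = j + n then a else 0) + (if k = i + n \<and> l = j then \<rho> a else 0)"
  by (simp add: OM_def em_def)

lemma EM_qn: "i < n \<Longrightarrow> j < n \<Longrightarrow> EM n i j a \<in> qn R0 R1 n"
  by (auto simp: qn_def gl_def EM_apply rho_add)
lemma OM_qn: "i < n \<Longrightarrow> j < n \<Longrightarrow> OM n i j a \<in> qn R0 R1 n"
  by (auto simp: qn_def gl_def OM_apply rho_add)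
lemma OM_tr: assumes "i < n" "j < n" shows "(\<Sum>k<n. OM n i j a k (k + n)) = (if i = j then a else 0)"
proof -
  have "(\<Sum>k<n. OM n i j a k (k + n)) = (\<Sum>k<n. if k = i then (if i = j then a else 0) else 0)"
    by (rule sum.cong) (auto simp: OM_apply)
  also have "\<dots> = (if i = j then a else 0)" using assms by (simp add: sum.delta)
  finally show ?thesis .
qed
lemma EM_tr: "i < n \<Longrightarrow> j < n \<Longrightarrow> (\<Sum>k<n. EM n i j a k (k + n)) = 0"
  by (simp add: EM_apply sum.distrib)
lemma EM_S: "i < n \<Longrightarrow> j < n \<Longrightarrow> EM n i j a \<in> Sset n"
  by (simp add: Sset_def EM_qn EM_tr kspan_0 commR_def)
lemma OM_S: "i < n \<Longrightarrow> j < n \<Longrightarrow> i \<noteq> j \<Longrightarrow> OM n i j a \<in> Sset n"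
  by (simp add: Sset_def OM_qn OM_tr kspan_0 commR_def)

lemma EM_mhom: "i < n \<Longrightarrow> j < n \<Longrightarrow> hom R0 R1 p a \<Longrightarrow> mhom R0 R1 n p (EM n i j a)"
  by (auto simp: mhom_def gl_def EM_apply hom_rho')
lemma OM_mhom: "i < n \<Longrightarrow> j < n \<Longrightarrow> hom R0 R1 q a \<Longrightarrow> mhom R0 R1 n (\<not> q) (OM n i j a)"
  by (auto simp: mhom_def gl_def OM_apply hom_rho')

lemma OM_mhom1: "i < n \<Longrightarrow> j < n \<Longrightarrow> mhom R0 R1 n True (OM n i j 1)"
  using OM_mhom[of i n j False 1] by (simp add: hom_def)
lemma one_hom: "hom R0 R1 False 1" by (simp add: hom_def)

lemma br_in: "X \<in> L \<Longrightarrow> Y \<in> L \<Longrightarrow> mhom R0 R1 n p X \<Longrightarrow> mhom R0 R1 n q Y \<Longrightarrow>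
   mbr n p q X Y \<in> derived sm R0 R1 n L"
  unfolding derived_def by (rule mspan_gen) blast

lemma EM_add: "EM n i j (a + b) = EM n i j a + EM n i j b"
  by (simp add: EM_def em_add rho_add)
lemma OM_add: "OM n i j (a + b) = OM n i j a + OM n i j b"
  by (simp add: OM_def em_add rho_add)
lemma OM_diff: "OM n i j (a - b) = OM n i j a - OM n i j b"
  by (rule ext, rule ext) (simp add: OM_apply rho_diff)

lemma hom_decomp: "\<exists>a0 a1. hom R0 R1 False a0 \<and> hom R0 R1 True a1 \<and> a = a0 + a1"
proof -
  obtain a0 a1 where "a0 \<in> R0" "a1 \<in> R1" "a = a0 + a1" using decomp[of a] by blast
  then show ?thesis by (intro exI[of _ a0] exI[of _ a1]) (simp add: hom_def)
qed

lemma mspan_0': "0 \<in> mspan sm S"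
  using mspan_0 by (simp add: zero_fun_def)

abbreviation "DD n \<equiv> derived sm R0 R1 n (Sset n)"

lemma dEM_off: assumes "i < n" "j < n" "i \<noteq> j" shows "EM n i j a \<in> DD n"
proof -
  have h: "EM n i j b \<in> DD n" if "hom R0 R1 p b" for p b
  proof -
    have "mbr n p False (EM n i i b) (EM n i j 1) \<in> DD n"
      by (rule br_in) (use assms that in \<open>auto intro: EM_S EM_mhom one_hom\<close>)
    then show ?thesis using t1[OF assms that] by simp
  qed
  obtain a0 a1 where "hom R0 R1 False a0" "hom R0 R1 True a1" "a = a0 + a1" using hom_decomp by blast
  then show ?thesis unfolding derived_def by (simp add: EM_add mspan_add' h[unfolded derived_def])
qed

end


context sa begin

lemma dEM_diag: assumes "i < n" "2 \<le> n" shows "EM n i i a \<in> DD n"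
proof -
  define j where "j = (if i = 0 then 1 else (0::nat))"
  have j: "j < n" "i \<noteq> j" "j \<noteq> i" using assms by (auto simp: j_def)
  have h: "EM n i i b \<in> DD n" if b: "hom R0 R1 q b" for q b
  proof -
    have "mbr n (\<not> q) (\<not> False) (OM n i j b) (OM n j i 1) \<in> DD n"
      by (rule br_in) (use assms j b in \<open>auto intro: OM_S OM_mhom OM_mhom1 one_hom\<close>)
    then have "EM n i i b + EM n j j b \<in> DD n" using t2[OF assms(1) j(1) j(2) b] by simp
    moreover have "mbr n q False (EM n i j b) (EM n j i 1) \<in> DD n"
      by (rule br_in) (use assms j b in \<open>auto intro: EM_S EM_mhom one_hom\<close>)
    then have "EM n i i b - EM n j j b \<in> DD n" using t3[OF assms(1) j(1) j(2) b] by simp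
    ultimately have "(EM n i i b + EM n j j b) + (EM n i i b - EM n j j b) \<in> DD n"
      unfolding derived_def by (rule mspan_add')
    then have "EM n i i b + EM n i i b \<in> DD n" by (simp add: algebra_simps)
    then show ?thesis unfolding derived_def by (rule mspan_half)
  qed
  obtain a0 a1 where "hom R0 R1 False a0" "hom R0 R1 True a1" "a = a0 + a1" using hom_decomp by blast
  then show ?thesis unfolding derived_def by (simp add: EM_add mspan_add' h[unfolded derived_def])
qed

lemma dOM_off: assumes "i < n" "j < n" "i \<noteq> j" shows "OM n i j a \<in> DD n"
proof -
  have h: "OM n i j b \<in> DD n" if b: "hom R0 R1 p b" for p b
  proof -
    have "mbr n p (\<not> False) (EM n i i b) (OM n i j 1) \<in> DD n"
      by (rule br_in) (use assms b in \<open>auto intro: EM_S OM_S EM_mhom OM_mhom OM_mhom1 one_hom\<close>)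
    then show ?thesis using t4[OF assms b] by simp
  qed
  obtain a0 a1 where "hom R0 R1 False a0" "hom R0 R1 True a1" "a = a0 + a1" using hom_decomp by blast
  then show ?thesis unfolding derived_def by (simp add: OM_add mspan_add' h[unfolded derived_def])
qed

lemma dOM_diff: assumes "i < n" "j < n" "i \<noteq> j" shows "OM n i i a - OM n j j a \<in> DD n"
proof -
  have h: "OM n i i b - OM n j j b \<in> DD n" if b: "hom R0 R1 p b" for p b
  proof -
    have "mbr n p (\<not> False) (EM n i j b) (OM n j i 1) \<in> DD n"
      by (rule br_in) (use assms b in \<open>auto intro: EM_S OM_S EM_mhom OM_mhom OM_mhom1 one_hom\<close>)
    then show ?thesis using t5[OF assms b] by simp
  qed
  obtain a0 a1 where "hom R0 R1 False a0" "hom R0 R1 True a1" "a = a0 + a1" using hom_decomp by blast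
  moreover have "OM n i i (a0 + a1) - OM n j j (a0 + a1) =
     (OM n i i a0 - OM n j j a0) + (OM n i i a1 - OM n j j a1)" by (simp add: OM_add algebra_simps)
  ultimately show ?thesis unfolding derived_def by (simp add: mspan_add' h[unfolded derived_def])
qed

lemma grp1: "x + z = (x + y) - (y - (z::'a::ab_group_add))" by (simp add: algebra_simps)
lemma grp2: "x - z = (x - y) + (y - (z::'a::ab_group_add))" by (simp add: algebra_simps)

lemma dOM_scomm: assumes "j < n" "0 < n" "0 \<noteq> j" "hom R0 R1 p a" "hom R0 R1 q b"
  shows "OM n 0 0 (scomm p q a b) \<in> DD n"
proof -
  have B: "mbr n p (\<not> q) (EM n 0 j a) (OM n j 0 b) \<in> DD n"
    by (rule br_in) (use assms in \<open>auto intro: EM_S OM_S EM_mhom OM_mhom\<close>)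
  have Dd: "OM n j j (b * a) - OM n 0 0 (b * a) \<in> DD n" using dOM_diff[of j n 0] assms by simp
  have T: "mbr n p (\<not> q) (EM n 0 j a) (OM n j 0 b) =
    (if p \<and> q then OM n 0 0 (a * b) + OM n j j (b * a) else OM n 0 0 (a * b) - OM n j j (b * a))"
    by (rule t6) (use assms in auto)
  show ?thesis
  proof (cases "p \<and> q")
    case True
    have "OM n 0 0 (scomm p q a b) = OM n 0 0 (a * b) + OM n 0 0 (b * a)"
      using True by (simp add: scomm_def OM_add)
    also have "\<dots> = mbr n p (\<not> q) (EM n 0 j a) (OM n j 0 b) - (OM n j j (b * a) - OM n 0 0 (b * a))"
      unfolding T using True by (simp only: simp_thms if_True) (rule grp1)
    finally show ?thesis using B Dd unfolding derived_def by (simp add: mspan_diff)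
  next
    case False
    have "OM n 0 0 (scomm p q a b) = OM n 0 0 (a * b) - OM n 0 0 (b * a)"
      using False by (auto simp: scomm_def OM_diff)
    also have "\<dots> = mbr n p (\<not> q) (EM n 0 j a) (OM n j 0 b) + (OM n j j (b * a) - OM n 0 0 (b * a))"
      unfolding T using False by (simp only: if_False) (rule grp2)
    finally show ?thesis using B Dd unfolding derived_def by (simp add: mspan_add')
  qed
qed

lemma dOM_commR: assumes "2 \<le> n" "c \<in> commR sm R0 R1" shows "OM n 0 0 c \<in> DD n"
proof -
  obtain m cc v where v: "\<forall>t<(m::nat). v t \<in> {scomm p q a b | p q a b. hom R0 R1 p a \<and> hom R0 R1 q b}"
    and c: "c = (\<Sum>t<m. sm (cc t) (v t))"
    using assms(2) unfolding commR_def kspan_def by blast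
  have "OM n 0 0 (v t) \<in> DD n" if tm: "t < m" for t
  proof -
    obtain p q a b where "v t = scomm p q a b" "hom R0 R1 p a" "hom R0 R1 q b" using v tm by blast
    then show ?thesis using dOM_scomm[of 1 n] assms(1) by simp
  qed
  then have "(\<lambda>k l. \<Sum>t\<in>{..<m}. (\<lambda>k l. sm (cc t) (OM n 0 0 (v t) k l)) k l) \<in> DD n"
    unfolding derived_def by (intro mspan_sum) (auto intro: mspan_sm)
  moreover have "OM n 0 0 c = (\<lambda>k l. \<Sum>t\<in>{..<m}. (\<lambda>k l. sm (cc t) (OM n 0 0 (v t) k l)) k l)"
    unfolding c by (rule ext, rule ext) (auto simp: OM_apply rho_sum rho_sm sm_add sum.distrib)
  ultimately show ?thesis by simp
qed

end



lemma sum2n: "(\<Sum>k<2*n. f k) = (\<Sum>k<n. f k) + (\<Sum>k<n. f (k + n))"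
  for f :: "nat \<Rightarrow> 'a::comm_monoid_add"
  using sum_concat[of f n n] by (simp add: mult_2 add.commute)

context sa begin

lemma scomm_in: "hom R0 R1 p a \<Longrightarrow> hom R0 R1 q b \<Longrightarrow> scomm p q a b \<in> commR sm R0 R1"
  unfolding commR_def by (rule kspan_gen) blast

lemma Tmem: assumes a: "hom R0 R1 p a" and d: "hom R0 R1 (\<not> q) d" and b: "hom R0 R1 (\<not> p) b"
  and c: "hom R0 R1 q c"
  shows "(if p \<and> q then (a * d + d * \<rho> a) + (b * \<rho> c + c * b) else (a * d - d * \<rho> a) + (b * \<rho> c - c * b))
     \<in> commR sm R0 R1"
proof -
  have kd: "x - y \<in> commR sm R0 R1" "x + y \<in> commR sm R0 R1"
    if "x \<in> commR sm R0 R1" "y \<in> commR sm R0 R1" for x y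
    using that kspan_diff kspan_add unfolding commR_def by blast+
  have ad: "scomm p (\<not> q) a d \<in> commR sm R0 R1" using a d by (rule scomm_in)
  have bc: "scomm (\<not> p) q b c \<in> commR sm R0 R1" using b c by (rule scomm_in)
  show ?thesis
  proof (cases p; cases q)
    assume "p" "q"
    then show ?thesis using ad bc kd(1)[OF ad bc] hom_rho[OF a] hom_rho[OF c]
      by (simp add: scomm_def algebra_simps)
  next
    assume "p" "\<not> q"
    then show ?thesis using ad bc kd(2)[OF ad bc] hom_rho[OF a] hom_rho[OF c]
      by (simp add: scomm_def algebra_simps)
  next
    assume "\<not> p" "q"
    then show ?thesis using ad bc kd(1)[OF ad bc] hom_rho[OF a] hom_rho[OF c]
      by (simp add: scomm_def algebra_simps)
  next
    assume "\<not> p" "\<not> q"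
    then show ?thesis using ad bc kd(2)[OF ad bc] hom_rho[OF a] hom_rho[OF c]
      by (simp add: scomm_def algebra_simps)
  qed
qed

lemma qnD: assumes "X \<in> qn R0 R1 n"
  shows "X \<in> gl n" "\<And>i j. i < n \<Longrightarrow> j < n \<Longrightarrow> X (i + n) (j + n) = \<rho> (X i j)"
    "\<And>i j. i < n \<Longrightarrow> j < n \<Longrightarrow> X (i + n) j = \<rho> (X i (j + n))"
  using assms unfolding qn_def by auto

lemma mmul_qn: assumes X: "X \<in> qn R0 R1 n" and Y: "Y \<in> qn R0 R1 n"
  shows "mmul n X Y \<in> qn R0 R1 n"
proof -
  note x = qnD[OF X] and y = qnD[OF Y]
  have "mmul n X Y \<in> gl n" using x(1) y(1) unfolding gl_def mmul_def by auto
  moreover have "mmul n X Y (i + n) (j + n) = \<rho> (mmul n X Y i j)" if "i < n" "j < n" for i j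
    unfolding mmul_def sum2n using that
    by (simp add: x y rho_sum rho_add rho_mult)
  moreover have "mmul n X Y (i + n) j = \<rho> (mmul n X Y i (j + n))" if "i < n" "j < n" for i j
    unfolding mmul_def sum2n using that
    by (simp add: x y rho_sum rho_add rho_mult)
  ultimately show ?thesis unfolding qn_def by blast
qed

lemma qn_add: "X \<in> qn R0 R1 n \<Longrightarrow> Y \<in> qn R0 R1 n \<Longrightarrow> (\<lambda>i j. X i j + Y i j) \<in> qn R0 R1 n"
  unfolding qn_def gl_def by (auto simp: rho_add)
lemma qn_diff: "X \<in> qn R0 R1 n \<Longrightarrow> Y \<in> qn R0 R1 n \<Longrightarrow> (\<lambda>i j. X i j - Y i j) \<in> qn R0 R1 n"
  unfolding qn_def gl_def by (auto simp: rho_diff)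
lemma qn_sm: "X \<in> qn R0 R1 n \<Longrightarrow> (\<lambda>i j. sm c (X i j)) \<in> qn R0 R1 n"
  unfolding qn_def gl_def by (auto simp: rho_sm)
lemma qn_0: "(\<lambda>i j. 0) \<in> qn R0 R1 n"
  unfolding qn_def gl_def by auto

lemma mbr_qn: assumes X: "X \<in> qn R0 R1 n" and Y: "Y \<in> qn R0 R1 n" shows "mbr n p q X Y \<in> qn R0 R1 n"
proof (cases "p \<and> q")
  case True
  then have "mbr n p q X Y = (\<lambda>i j. mmul n X Y i j + mmul n Y X i j)" unfolding mbr_def by simp
  then show ?thesis using qn_add[OF mmul_qn[OF X Y] mmul_qn[OF Y X]] by simp
next
  case False
  then have "mbr n p q X Y = (\<lambda>i j. mmul n X Y i j - mmul n Y X i j)" unfolding mbr_def by auto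
  then show ?thesis using qn_diff[OF mmul_qn[OF X Y] mmul_qn[OF Y X]] by simp
qed

lemma tr_mbr: assumes X: "X \<in> qn R0 R1 n" and Y: "Y \<in> qn R0 R1 n"
  and hX: "mhom R0 R1 n p X" and hY: "mhom R0 R1 n q Y"
  shows "(\<Sum>i<n. mbr n p q X Y i (i + n)) \<in> commR sm R0 R1"
proof -
  note x = qnD[OF X] and y = qnD[OF Y]
  define T where "T i k = (if p \<and> q then (X i k * Y k (i+n) + Y k (i+n) * \<rho> (X i k)) + (X i (k+n) * \<rho> (Y k i) + Y k i * X i (k+n))
      else (X i k * Y k (i+n) - Y k (i+n) * \<rho> (X i k)) + (X i (k+n) * \<rho> (Y k i) - Y k i * X i (k+n)))" for i k
  define S1 where "S1 = (\<Sum>i<n. \<Sum>k<n. X i k * Y k (i+n) + X i (k+n) * \<rho> (Y k i))"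
  define S2 where "S2 = (\<Sum>i<n. \<Sum>k<n. Y i k * X k (i+n) + Y i (k+n) * \<rho> (X k i))"
  define S2' where "S2' = (\<Sum>i<n. \<Sum>k<n. Y k i * X i (k+n) + Y k (i+n) * \<rho> (X i k))"
  have sw: "S2 = S2'" unfolding S2_def S2'_def by (rule sum.swap)
  have M1: "mmul n X Y i (i+n) = (\<Sum>k<n. X i k * Y k (i+n) + X i (k+n) * \<rho> (Y k i))" if "i < n" for i
    unfolding mmul_def sum2n using that by (simp add: y sum.distrib)
  have M2: "mmul n Y X i (i+n) = (\<Sum>k<n. Y i k * X k (i+n) + Y i (k+n) * \<rho> (X k i))" if "i < n" for i
    unfolding mmul_def sum2n using that by (simp add: x sum.distrib)
  have e1: "(\<Sum>i<n. mmul n X Y i (i+n)) = S1" unfolding S1_def by (rule sum.cong) (simp_all add: M1)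
  have e2: "(\<Sum>i<n. mmul n Y X i (i+n)) = S2" unfolding S2_def by (rule sum.cong) (simp_all add: M2)
  have tr: "(\<Sum>i<n. mbr n p q X Y i (i + n)) = (if p \<and> q then S1 + S2 else S1 - S2)"
  proof (cases "p \<and> q")
    case True
    then have "(\<Sum>i<n. mbr n p q X Y i (i + n)) = (\<Sum>i<n. mmul n X Y i (i+n) + mmul n Y X i (i+n))"
      unfolding mbr_def by simp
    then show ?thesis using True e1 e2 by (simp add: sum.distrib)
  next
    case False
    then have "(\<Sum>i<n. mbr n p q X Y i (i + n)) = (\<Sum>i<n. mmul n X Y i (i+n) - mmul n Y X i (i+n))"
      unfolding mbr_def by auto
    then show ?thesis using False e1 e2 by (auto simp: sum_subtractf)
  qed
  have TT: "(\<Sum>i<n. \<Sum>k<n. T i k) = (if p \<and> q then S1 + S2' else S1 - S2')"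
  proof (cases "p \<and> q")
    case True
    have "(\<Sum>i<n. \<Sum>k<n. T i k) = (\<Sum>i<n. \<Sum>k<n. (X i k * Y k (i+n) + X i (k+n) * \<rho> (Y k i)) +
          (Y k i * X i (k+n) + Y k (i+n) * \<rho> (X i k)))"
      unfolding T_def using True by (simp add: algebra_simps)
    then show ?thesis using True unfolding S1_def S2'_def by (simp add: sum.distrib)
  next
    case False
    have "(\<Sum>i<n. \<Sum>k<n. T i k) = (\<Sum>i<n. \<Sum>k<n. (X i k * Y k (i+n) + X i (k+n) * \<rho> (Y k i)) -
          (Y k i * X i (k+n) + Y k (i+n) * \<rho> (X i k)))"
    proof -
      have nb: "(p \<and> q) = False" using False by simp
      show ?thesis unfolding T_def nb if_False by (simp add: algebra_simps)
    qed
    then show ?thesis using False unfolding S1_def S2'_def by (auto simp: sum_subtractf)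
  qed
  have "T i k \<in> commR sm R0 R1" if "i < n" "k < n" for i k
  proof -
    have h: "hom R0 R1 (p \<noteq> ((n \<le> a) \<noteq> (n \<le> b))) (X a b)" "hom R0 R1 (q \<noteq> ((n \<le> a) \<noteq> (n \<le> b))) (Y a b)"
      if "a < 2 * n" "b < 2 * n" for a b
      using hX hY that unfolding mhom_def by auto
    have "hom R0 R1 p (X i k)" using h(1)[of i k] that by simp
    moreover have "hom R0 R1 (\<not> q) (Y k (i+n))" using h(2)[of k "i+n"] that by simp
    moreover have "hom R0 R1 (\<not> p) (X i (k+n))" using h(1)[of i "k+n"] that by simp
    moreover have "hom R0 R1 q (Y k i)" using h(2)[of k i] that by simp
    ultimately show ?thesis unfolding T_def by (rule Tmem)
  qed
  then have "(\<Sum>i<n. \<Sum>k<n. T i k) \<in> commR sm R0 R1"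
    unfolding commR_def by (intro kspan_sum) auto
  then have "(if p \<and> q then S1 + S2' else S1 - S2') \<in> commR sm R0 R1" unfolding TT .
  then show ?thesis unfolding tr sw .
qed

lemma Sset_gen: "X \<in> qn R0 R1 n \<Longrightarrow> Y \<in> qn R0 R1 n \<Longrightarrow> mhom R0 R1 n p X \<Longrightarrow> mhom R0 R1 n q Y
   \<Longrightarrow> mbr n p q X Y \<in> Sset n"
  unfolding Sset_def using mbr_qn tr_mbr by blast

lemma Sset_0: "(\<lambda>i j. 0) \<in> Sset n"
  unfolding Sset_def using qn_0 kspan_0 unfolding commR_def by simp
lemma Sset_add: "X \<in> Sset n \<Longrightarrow> Y \<in> Sset n \<Longrightarrow> (\<lambda>i j. X i j + Y i j) \<in> Sset n"
  unfolding Sset_def commR_def using qn_add kspan_add by (auto simp: sum.distrib)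
lemma Sset_sm: "X \<in> Sset n \<Longrightarrow> (\<lambda>i j. sm c (X i j)) \<in> Sset n"
  unfolding Sset_def commR_def using qn_sm kspan_sm by (auto simp: sm_sum[symmetric])

lemma span_Sset: assumes "\<And>X. X \<in> G \<Longrightarrow> X \<in> Sset n" shows "mspan sm G \<subseteq> Sset n"
proof
  fix X assume "X \<in> mspan sm G"
  then obtain m c V where V: "\<forall>t<(m::nat). V t \<in> G" and e: "\<forall>i j. X i j = (\<Sum>t<m. sm (c t) (V t i j))"
    unfolding mspan_def by blast
  have "(\<lambda>i j. \<Sum>t<m'. sm (c t) (V t i j)) \<in> Sset n" if "m' \<le> m" for m'
    using that
  proof (induction m')
    case 0 then show ?case using Sset_0 by simp
  next
    case (Suc m')
    then have "(\<lambda>i j. (\<Sum>t<m'. sm (c t) (V t i j)) + sm (c m') (V m' i j)) \<in> Sset n"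
      using Sset_add[OF _ Sset_sm[OF assms]] V by simp
    then show ?case by simp
  qed
  moreover have "X = (\<lambda>i j. \<Sum>t<m. sm (c t) (V t i j))" using e by auto
  ultimately show "X \<in> Sset n" by simp
qed

lemma derived_qn_sub: "derived sm R0 R1 n (qn R0 R1 n) \<subseteq> Sset n"
  unfolding derived_def by (rule span_Sset) (auto intro: Sset_gen)

lemma derived_mono: "L \<subseteq> L' \<Longrightarrow> derived sm R0 R1 n L \<subseteq> derived sm R0 R1 n L'"
  unfolding derived_def by (rule mspan_mono) blast

end


context sa begin

lemma if_app0: "(if P then M else (0::'r mat)) k l = (if P then M k l else 0)" by simp

lemma OM_sum_apply: "(\<Sum>t\<in>T. OM n i j (f t) k l) = OM n i j (\<Sum>t\<in>T. f t) k l"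
  by (auto simp: OM_apply rho_sum sum.distrib)

lemma S_sub: assumes n: "2 \<le> n" and XS: "X \<in> Sset n" shows "X \<in> DD n"
proof -
  have Xq: "X \<in> qn R0 R1 n" and trc: "(\<Sum>i<n. X i (i + n)) \<in> commR sm R0 R1"
    using XS unfolding Sset_def by auto
  note x = qnD[OF Xq]
  define F where "F i j = EM n i j (X i j) + OM n i j (X i (j + n)) - (if i = j then OM n 0 0 (X i (i + n)) else 0)" for i j
  have FD: "F i j \<in> DD n" if "i < n" "j < n" for i j
  proof (cases "i = j")
    case False
    then have "F i j = EM n i j (X i j) + OM n i j (X i (j + n))" unfolding F_def by simp
    then show ?thesis using dEM_off[OF that False] dOM_off[OF that False] unfolding derived_def
      by (simp add: mspan_add')
  next
    case True
    then have e: "F i j = EM n i i (X i i) + (OM n i i (X i (i + n)) - OM n 0 0 (X i (i + n)))"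
      unfolding F_def by (simp add: algebra_simps)
    have "OM n i i (X i (i + n)) - OM n 0 0 (X i (i + n)) \<in> DD n"
    proof (cases "i = 0")
      case True then show ?thesis using mspan_0' unfolding derived_def by simp
    next
      case False then show ?thesis using dOM_diff[of i n 0] that n by simp
    qed
    then show ?thesis unfolding e using dEM_diag[of i n] that n unfolding derived_def
      by (simp add: mspan_add')
  qed
  have G: "(\<lambda>k l. \<Sum>j\<in>{..<n}. F i j k l) \<in> DD n" if "i < n" for i
    unfolding derived_def by (rule mspan_sum) (use FD[OF that] in \<open>auto simp: derived_def\<close>)
  have T: "(\<lambda>k l. \<Sum>i\<in>{..<n}. (\<lambda>k l. \<Sum>j\<in>{..<n}. F i j k l) k l) \<in> DD n"
    unfolding derived_def by (rule mspan_sum) (use G in \<open>auto simp: derived_def\<close>)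
  have O: "OM n 0 0 (\<Sum>i<n. X i (i + n)) \<in> DD n" using dOM_commR[OF n trc] .
  have all: "(\<lambda>k l. (\<Sum>i\<in>{..<n}. (\<lambda>k l. \<Sum>j\<in>{..<n}. F i j k l) k l) + OM n 0 0 (\<Sum>i<n. X i (i + n)) k l) \<in> DD n"
    using T O unfolding derived_def by (rule mspan_add)
  have E1: "X k l = (\<Sum>i<n. \<Sum>j<n. EM n i j (X i j) k l + OM n i j (X i (j + n)) k l)" for k l
  proof -
    have "(\<Sum>i<n. \<Sum>j<n. EM n i j (X i j) k l + OM n i j (X i (j + n)) k l) =
       (if k < n \<and> l < n then X k l else 0) +
       (if n \<le> k \<and> k < n + n \<and> n \<le> l \<and> l < n + n then \<rho> (X (k - n) (l - n)) else 0) +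
       ((if k < n \<and> n \<le> l \<and> l < n + n then X k (l - n + n) else 0) +
       (if n \<le> k \<and> k < n + n \<and> l < n then \<rho> (X (k - n) (l + n)) else 0))"
      by (simp add: EM_apply OM_apply sum.distrib H00 H0n Hn0 Hnn)
    also have "\<dots> = X k l"
    proof -
      have g: "X k l = 0" if "2 * n \<le> k \<or> 2 * n \<le> l" using x(1) that unfolding gl_def by auto
      have q1: "X k l = \<rho> (X (k - n) (l - n))" if "n \<le> k" "k < n + n" "n \<le> l" "l < n + n"
        using x(2)[of "k - n" "l - n"] that by simp
      have q2: "X k l = \<rho> (X (k - n) (l + n))" if "n \<le> k" "k < n + n" "l < n"
        using x(3)[of "k - n" l] that by simp
      show ?thesis using g q1 q2 by (auto simp: mult_2)
    qed
    finally show ?thesis by simp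
  qed
  have E2: "(\<Sum>i<n. \<Sum>j<n. (if i = j then OM n 0 0 (X i (i + n)) else 0) k l) = OM n 0 0 (\<Sum>i<n. X i (i + n)) k l" for k l
  proof -
    have "(\<Sum>i<n. \<Sum>j<n. (if i = j then OM n 0 0 (X i (i + n)) else 0) k l) = (\<Sum>i<n. OM n 0 0 (X i (i + n)) k l)"
      by (rule sum.cong) (simp_all only: if_app0 sum.delta, simp)
    then show ?thesis by (simp add: OM_sum_apply)
  qed
  have "X = (\<lambda>k l. (\<Sum>i\<in>{..<n}. (\<lambda>k l. \<Sum>j\<in>{..<n}. F i j k l) k l) + OM n 0 0 (\<Sum>i<n. X i (i + n)) k l)"
  proof (rule ext, rule ext)
    fix k l
    have "(\<Sum>i<n. \<Sum>j<n. F i j k l) = (\<Sum>i<n. \<Sum>j<n. EM n i j (X i j) k l + OM n i j (X i (j + n)) k l)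
        - (\<Sum>i<n. \<Sum>j<n. (if i = j then OM n 0 0 (X i (i + n)) else 0) k l)"
      unfolding F_def by (simp add: sum_subtractf)
    then show "X k l = (\<lambda>k l. (\<Sum>i\<in>{..<n}. (\<lambda>k l. \<Sum>j\<in>{..<n}. F i j k l) k l) + OM n 0 0 (\<Sum>i<n. X i (i + n)) k l) k l"
      using E1[of k l] E2[of k l] by simp
  qed
  with all show ?thesis by simp
qed

end

theorem corollary2p2:
  fixes sm :: "'k::comm_ring_1 \<Rightarrow> 'r::ring_1 \<Rightarrow> 'r"
    and R0 R1 :: "'r set" and n :: nat
  assumes "superalg sm R0 R1" and "2 \<le> n"
  shows "derived sm R0 R1 n (sqn sm R0 R1 n) = sqn sm R0 R1 n \<and>
         sqn sm R0 R1 n = {X \<in> qn R0 R1 n. (\<Sum>i<n. X i (i + n)) \<in> commR sm R0 R1}"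
proof -
  interpret sa sm R0 R1 by unfold_locales (rule assms(1))
  have sub1: "sqn sm R0 R1 n \<subseteq> Sset n" unfolding sqn_def by (rule derived_qn_sub)
  have SsubQ: "Sset n \<subseteq> qn R0 R1 n" unfolding Sset_def by auto
  have sub3: "Sset n \<subseteq> derived sm R0 R1 n (Sset n)" using S_sub[OF assms(2)] by blast
  have sub2: "Sset n \<subseteq> sqn sm R0 R1 n"
    using sub3 derived_mono[OF SsubQ, where n=n] unfolding sqn_def by blast
  have eq: "sqn sm R0 R1 n = Sset n" using sub1 sub2 by blast
  have dq: "derived sm R0 R1 n (qn R0 R1 n) = Sset n" using eq unfolding sqn_def .
  have "derived sm R0 R1 n (sqn sm R0 R1 n) \<subseteq> sqn sm R0 R1 n"
    unfolding eq using derived_mono[OF SsubQ, where n=n] dq by simp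
  moreover have "sqn sm R0 R1 n \<subseteq> derived sm R0 R1 n (sqn sm R0 R1 n)" unfolding eq by (rule sub3)
  ultimately show ?thesis using eq unfolding Sset_def by blast
qed

end
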